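(* Let $t$ be an $\mathrm{SL}_2$-tiling with $t_{jp}=1$. (i) If $t_{xy}=1$ for some $(x,y)$ with $x<j,\ y>p$, then either $t_{xp}=1$ for some $x<j$, or $t_{jy}=1$ for some $y>p$, but not both. (ii) If $t_{xy}=1$ for some $(x,y)$ with $x>j,\ y<p$, then either $t_{xp}=1$ for some $x>j$, or $t_{jy}=1$ for some $y<p$, but not both.
   Context: An $\mathrm{SL}_2$-tiling is a map $t:\mathbb{Z}\times\mathbb{Z}\to\{1,2,3,\dots\}$, $(i,j)\mapsto t_{ij}$, with $t_{ij}t_{i+1,j+1}-t_{i,j+1}t_{i+1,j}=1$ for all $i,j$. *)

theory Defs
  imports Main
begin

definition SL2_tiling :: "(int \<Rightarrow> int \<Rightarrow> int) \<Rightarrow> bool" where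
  "SL2_tiling t \<longleftrightarrow>
     (\<forall>i j. t i j \<ge> 1) \<and>
     (\<forall>i j. t i j * t (i+1) (j+1) - t i (j+1) * t (i+1) j = 1)"

end

theory Submission
  imports Defs
begin

lemma cross_trans:
  fixes ua ub uc ta tb tc :: int
  assumes "tb > 0" "ua*tb = ub*ta" "ub*tc = uc*tb"
  shows "ua*tc = uc*ta"
proof -
  have "(ua*tc)*tb = (ua*tb)*tc" by (simp add: algebra_simps)
  also have "\<dots> = ta*(ub*tc)" using assms(2) by (simp add: algebra_simps)
  also have "\<dots> = (uc*ta)*tb" using assms(3) by (simp add: algebra_simps)
  finally show ?thesis using assms(1) by simp
qed

lemma prod_one:
  fixes a b :: int
  assumes "a \<ge> 1" "b \<ge> 1" "a*b = 1" shows "a = 1" "b = 1"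
  using assms zmult_eq_1_iff by auto

lemma arithA:
  fixes u1 u2 v1 v2 :: int
  assumes "u1 \<ge> 1" "v1 \<ge> 1" "u1+u2 \<le> 0" "v1+v2 \<ge> 1" "u1*v2 - u2*v1 = 1"
  shows "u1 = 1"
proof -
  have e: "u1*(v1+v2) + (-(u1+u2))*v1 = 1" using assms(5) by (simp add: algebra_simps)
  have "1*1 \<le> u1*(v1+v2)" using assms by (intro mult_mono) auto
  moreover have "0 \<le> (-(u1+u2))*v1" using assms by (intro mult_nonneg_nonneg) auto
  ultimately have "u1*(v1+v2) = 1" using e by linarith
  thus ?thesis using prod_one assms by blast
qed

lemma arithB:
  fixes u1 u2 v1 v2 :: int
  assumes "u2 \<ge> 1" "v2 \<ge> 1" "u1+u2 \<ge> 1" "v1+v2 \<le> 0" "u1*v2 - u2*v1 = 1"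
  shows "v2 = 1"
proof -
  have e: "(u1+u2)*v2 + u2*(-(v1+v2)) = 1" using assms(5) by (simp add: algebra_simps)
  have "1*1 \<le> (u1+u2)*v2" using assms by (intro mult_mono) auto
  moreover have "0 \<le> u2*(-(v1+v2))" using assms by (intro mult_nonneg_nonneg) auto
  ultimately have "(u1+u2)*v2 = 1" using e by linarith
  thus ?thesis using prod_one assms by blast
qed

lemma arith_both:
  fixes a1 a2 b1 b2 :: int
  assumes "a1 \<ge> 1" "b1 \<le> -1" "a1+a2 \<ge> 1" "b1+b2 \<ge> 1" "a1*b2 - a2*b1 = 1"
  shows False
proof -
  have e: "(a1+a2)*(-b1) + a1*(b1+b2) = 1" using assms(5) by (simp add: algebra_simps)
  have "1*1 \<le> (a1+a2)*(-b1)" using assms by (intro mult_mono) auto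
  moreover have "1*1 \<le> a1*(b1+b2)" using assms by (intro mult_mono) auto
  ultimately show False using e by linarith
qed

lemma arith_not:
  fixes a b :: int
  assumes "a \<le> -1" "b \<le> -1" "1*1 - a*b \<ge> 1"
  shows False
proof -
  have "1*1 \<le> (-a)*(-b)" using assms by (intro mult_mono) auto
  thus False using assms by simp
qed

locale til =
  fixes t :: "int \<Rightarrow> int \<Rightarrow> int" and j p :: int
  assumes pos: "\<And>i k. 1 \<le> t i k"
    and dt: "\<And>i k. t i k * t (i+1) (k+1) - t i (k+1) * t (i+1) k = 1"
    and one: "t j p = 1"
begin

definition A where "A x = t x (p+1) - t x p * t j (p+1)"
definition B where "B y = t (j-1) y - t (j-1) p * t j y"

lemma K_adj:
  "(t (x-1) y + t (x+1) y) * t x (y+1) = (t (x-1) (y+1) + t (x+1) (y+1)) * t x y"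
proof -
  have e1: "t (x-1) y * t x (y+1) - t (x-1) (y+1) * t x y = 1" using dt[of "x-1" y] by simp
  have e2: "t x y * t (x+1) (y+1) - t x (y+1) * t (x+1) y = 1" using dt[of x y] by simp
  show ?thesis using e1 e2 by (simp add: algebra_simps)
qed

lemma K:
  "(t (x-1) y + t (x+1) y) * t x p = (t (x-1) p + t (x+1) p) * t x y"
proof -
  let ?U = "\<lambda>y. t (x-1) y + t (x+1) y"
  let ?T = "\<lambda>y. t x y"
  have up: "?U (p + int n) * ?T p = ?U p * ?T (p + int n)" for n
  proof (induction n)
    case 0 then show ?case by simp
  next
    case (Suc n)
    have a: "?U (p + int n + 1) * ?T (p + int n) = ?U (p + int n) * ?T (p + int n + 1)"
      using K_adj[of x "p + int n"] by simp
    have "?U (p + int n + 1) * ?T p = ?U p * ?T (p + int n + 1)"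
      by (rule cross_trans[OF _ a Suc]) (use pos[of x "p + int n"] in simp)
    then show ?case by (simp add: algebra_simps)
  qed
  have down: "?U (p - int n) * ?T p = ?U p * ?T (p - int n)" for n
  proof (induction n)
    case 0 then show ?case by simp
  next
    case (Suc n)
    have a: "?U (p - int n - 1) * ?T (p - int n) = ?U (p - int n) * ?T (p - int n - 1)"
      using K_adj[of x "p - int n - 1"] by (simp add: algebra_simps)
    have "?U (p - int n - 1) * ?T p = ?U p * ?T (p - int n - 1)"
      by (rule cross_trans[OF _ a Suc]) (use pos[of x "p - int n"] in simp)
    then show ?case by (simp add: algebra_simps)
  qed
  show ?thesis
  proof (cases "y \<ge> p")
    case True
    then have "y = p + int (nat (y - p))" by simp
    then show ?thesis using up[of "nat (y-p)"] by metis
  next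
    case False
    then have "y = p - int (nat (p - y))" by simp
    then show ?thesis using down[of "nat (p-y)"] by metis
  qed
qed

definition F where "F x \<longleftrightarrow> (\<forall>y. t x y = t x p * t j y - A x * B y)"

lemma Fj: "F j"
  unfolding F_def A_def using one by simp

lemma Fj1: "F (j-1)"
proof -
  have "A (j-1) = -1" using dt[of "j-1" p] one unfolding A_def by (simp add: algebra_simps)
  then show ?thesis unfolding F_def B_def by simp
qed

lemma Fstep:
  assumes f0: "F x" and f1: "F (x+1)"
  shows "F (x-1)"
  unfolding F_def
proof
  fix y
  let ?S = "t (x-1) p + t (x+1) p"
  let ?c = "t j (p+1)"
  have Ky: "(t (x-1) y + t (x+1) y) * t x p = ?S * t x y" using K .
  have Kp: "(t (x-1) (p+1) + t (x+1) (p+1)) * t x p = ?S * t x (p+1)" using K .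
  have fx: "t x y = t x p * t j y - A x * B y" using f0 unfolding F_def by blast
  have fx1: "t (x+1) y = t (x+1) p * t j y - A (x+1) * B y" using f1 unfolding F_def by blast
  have sA: "t x p * (A (x-1) + A (x+1)) = ?S * A x"
  proof -
    have "t x p * (A (x-1) + A (x+1)) = t x p * (t (x-1) (p+1) + t (x+1) (p+1)) - ?S * ?c * t x p"
      unfolding A_def by (simp add: algebra_simps)
    also have "\<dots> = ?S * t x (p+1) - ?S * ?c * t x p" using Kp by (simp add: algebra_simps)
    also have "\<dots> = ?S * A x" unfolding A_def by (simp add: algebra_simps)
    finally show ?thesis .
  qed
  have "t x p * (t (x-1) p * t j y - A (x-1) * B y + t (x+1) y)
      = t x p * (?S * t j y) - (t x p * (A (x-1) + A (x+1))) * B y"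
    unfolding fx1 by (simp add: algebra_simps)
  also have "\<dots> = ?S * (t x p * t j y - A x * B y)" using sA by (simp add: algebra_simps)
  also have "\<dots> = t x p * (t (x-1) y + t (x+1) y)" using Ky fx by (simp add: algebra_simps)
  finally have "t x p * (t (x-1) p * t j y - A (x-1) * B y) = t x p * t (x-1) y"
    by (simp add: algebra_simps)
  moreover have "t x p \<noteq> 0" using pos[of x p] by simp
  ultimately show "t (x-1) y = t (x-1) p * t j y - A (x-1) * B y" by simp
qed

lemma Fle: assumes "x \<le> j" shows "F x"
proof -
  have "F (j - int n) \<and> F (j - int n - 1)" for n
  proof (induction n)
    case 0 then show ?case using Fj Fj1 by simp
  next
    case (Suc n)
    then have "F ((j - int n - 1) - 1)" using Fstep[of "j - int n - 1"] by simp
    moreover have "(j - int n - 1) - 1 = j - int (Suc n) - 1" by simp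
    moreover have "j - int (Suc n) = j - int n - 1" by simp
    ultimately show ?case using Suc by metis
  qed
  moreover have "x = j - int (nat (j - x))" using assms by simp
  ultimately show ?thesis by metis
qed

lemma Fdet: "x \<le> j \<Longrightarrow> t x y = t x p * t j y - A x * B y"
  using Fle unfolding F_def by blast

lemma A_adj: "t x p * A (x+1) - A x * t (x+1) p = 1"
  using dt[of x p] unfolding A_def by (simp add: algebra_simps)

lemma B_adj: "B y * t j (y+1) - t j y * B (y+1) = 1"
  using dt[of "j-1" y] unfolding B_def by (simp add: algebra_simps)

lemma Aj: "A j = 0" unfolding A_def using one by simp
lemma Bp: "B p = 0" unfolding B_def using one by simp

lemma A_step: assumes "A (x+1) \<le> 0" shows "A x < 0"
proof (rule ccontr)
  assume "\<not> A x < 0"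
  then have "0 \<le> A x * t (x+1) p" using pos[of "x+1" p] by (intro mult_nonneg_nonneg) auto
  moreover have "t x p * A (x+1) \<le> 0" using assms pos[of x p] by (simp add: mult_nonneg_nonpos)
  ultimately show False using A_adj[of x] by linarith
qed

lemma B_step: assumes "B y \<le> 0" shows "B (y+1) < 0"
proof (rule ccontr)
  assume "\<not> B (y+1) < 0"
  then have "0 \<le> t j y * B (y+1)" using pos[of j y] by (intro mult_nonneg_nonneg) auto
  moreover have "B y * t j (y+1) \<le> 0" using assms pos[of j "y+1"] by (simp add: mult_nonpos_nonneg)
  ultimately show False using B_adj[of y] by linarith
qed

lemma Aneg: assumes "x < j" shows "A x < 0"
proof -
  have "A (j - int n) \<le> 0" for n
  proof (induction n)
    case 0 then show ?case using Aj by simp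
  next
    case (Suc n)
    then have "A (j - int n - 1) < 0" using A_step[of "j - int n - 1"] by simp
    then show ?case by (simp add: algebra_simps)
  qed
  from this[of "nat (j - (x+1))"] have "A (x+1) \<le> 0" using assms by simp
  then show ?thesis by (rule A_step)
qed

lemma Bneg: assumes "y > p" shows "B y < 0"
proof -
  have "B (p + int n) \<le> 0" for n
  proof (induction n)
    case 0 then show ?case using Bp by simp
  next
    case (Suc n)
    then have "B (p + int n + 1) < 0" using B_step[of "p + int n"] by simp
    then show ?case by (simp add: algebra_simps)
  qed
  from this[of "nat (y - 1 - p)"] have "B (y-1) \<le> 0" using assms by simp
  then show ?thesis using B_step[of "y-1"] by simp
qed

lemma QA: "1 \<le> t (j - int n) p + A (j - int n) \<or> (\<exists>x'<j. t x' p = 1)"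
proof (induction n)
  case 0 then show ?case using one Aj by simp
next
  case (Suc n)
  let ?x = "j - int n - 1"
  have xs: "j - int (Suc n) = ?x" by simp
  show ?case
  proof (cases "1 \<le> t ?x p + A ?x")
    case True then show ?thesis unfolding xs by simp
  next
    case False
    show ?thesis
    proof (cases "1 \<le> t (j - int n) p + A (j - int n)")
      case True
      have d: "t ?x p * A (j - int n) - A ?x * t (j - int n) p = 1" using A_adj[of ?x] by simp
      have "t ?x p = 1"
        by (rule arithA[OF _ _ _ _ d]) (use pos \<open>\<not> 1 \<le> t ?x p + A ?x\<close> True in auto)
      then show ?thesis by auto
    next
      case False then show ?thesis using Suc by simp
    qed
  qed
qed

lemma QB: "1 \<le> B (p + int n) + t j (p + int n) \<or> (\<exists>y'>p. t j y' = 1)"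
proof (induction n)
  case 0 then show ?case using one Bp by simp
next
  case (Suc n)
  let ?y = "p + int n + 1"
  have ys: "p + int (Suc n) = ?y" by simp
  show ?case
  proof (cases "1 \<le> B ?y + t j ?y")
    case True then show ?thesis unfolding ys by simp
  next
    case False
    show ?thesis
    proof (cases "1 \<le> B (p + int n) + t j (p + int n)")
      case True
      have d: "B (p + int n) * t j ?y - t j (p + int n) * B ?y = 1"
        using B_adj[of "p + int n"] by simp
      have "t j ?y = 1"
        by (rule arithB[OF _ _ _ _ d]) (use pos \<open>\<not> 1 \<le> B ?y + t j ?y\<close> True in auto)
      then show ?thesis by auto
    next
      case False then show ?thesis using Suc by simp
    qed
  qed
qed

lemma part1:
  "(\<exists>x y. x < j \<and> y > p \<and> t x y = 1) \<longrightarrow>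
     ((\<exists>x. x < j \<and> t x p = 1) \<noteq> (\<exists>y. y > p \<and> t j y = 1))"
proof
  assume "\<exists>x y. x < j \<and> y > p \<and> t x y = 1"
  then obtain x y where xy: "x < j" "y > p" "t x y = 1" by blast
  have notboth: False if a: "x' < j" "t x' p = 1" and b: "y' > p" "t j y' = 1" for x' y'
  proof -
    have "t x' y' = 1 * 1 - A x' * B y'" using Fdet[of x' y'] a b by simp
    then show False using arith_not[of "A x'" "B y'"] Aneg[OF a(1)] Bneg[OF b(1)] pos[of x' y'] by simp
  qed
  have atleast: "(\<exists>x. x < j \<and> t x p = 1) \<or> (\<exists>y. y > p \<and> t j y = 1)"
  proof (cases "t x p + A x \<le> 0")
    case True
    have "x = j - int (nat (j - x))" using xy by simp
    then have "1 \<le> t x p + A x \<or> (\<exists>x'<j. t x' p = 1)" using QA[of "nat (j - x)"] by metis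
    then show ?thesis using True by auto
  next
    case c1: False
    show ?thesis
    proof (cases "B y + t j y \<le> 0")
      case True
      have "y = p + int (nat (y - p))" using xy by simp
      then have "1 \<le> B y + t j y \<or> (\<exists>y'>p. t j y' = 1)" using QB[of "nat (y - p)"] by metis
      then show ?thesis using True by auto
    next
      case False
      have "t x p * t j y - A x * B y = 1" using Fdet[of x y] xy by simp
      then show ?thesis using arith_both[of "t x p" "B y" "A x" "t j y"] c1 False pos[of x p]
          Bneg[OF xy(2)] by auto
    qed
  qed
  show "(\<exists>x. x < j \<and> t x p = 1) \<noteq> (\<exists>y. y > p \<and> t j y = 1)"
    using notboth atleast by blast
qed

end

theorem proposition8p1:
  fixes t :: "int \<Rightarrow> int \<Rightarrow> int" and j p :: int
  assumes "SL2_tiling t" and "t j p = 1"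
  shows "((\<exists>x y. x < j \<and> y > p \<and> t x y = 1) \<longrightarrow>
           ((\<exists>x. x < j \<and> t x p = 1) \<noteq> (\<exists>y. y > p \<and> t j y = 1)))
       \<and> ((\<exists>x y. x > j \<and> y < p \<and> t x y = 1) \<longrightarrow>
           ((\<exists>x. x > j \<and> t x p = 1) \<noteq> (\<exists>y. y < p \<and> t j y = 1)))"
proof
  interpret T1: til t j p using assms unfolding SL2_tiling_def by unfold_locales auto
  show "(\<exists>x y. x < j \<and> y > p \<and> t x y = 1) \<longrightarrow>
           ((\<exists>x. x < j \<and> t x p = 1) \<noteq> (\<exists>y. y > p \<and> t j y = 1))" by (rule T1.part1)
next
  let ?s = "\<lambda>i k. t (-i) (-k)"
  interpret T2: til ?s "-j" "-p"
  proof unfold_locales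
    fix i k
    show "1 \<le> t (-i) (-k)" using assms unfolding SL2_tiling_def by blast
    have "t (-i-1) (-k-1) * t (-i-1+1) (-k-1+1) - t (-i-1) (-k-1+1) * t (-i-1+1) (-k-1) = 1"
      using assms unfolding SL2_tiling_def by blast
    moreover have "-i-1+1 = -i" "-k-1+1 = -k" "-(i+1) = -i-1" "-(k+1) = -k-1" by simp_all
    ultimately have "t (-i-1) (-k-1) * t (-i) (-k) - t (-i-1) (-k) * t (-i) (-k-1) = 1"
      by simp
    then show "t (-i) (-k) * t (-(i+1)) (-(k+1)) - t (-i) (-(k+1)) * t (-(i+1)) (-k) = 1"
      by (simp only: \<open>-(i+1) = -i-1\<close> \<open>-(k+1) = -k-1\<close>) (simp add: mult.commute)
  next
    show "t (- (- j)) (- (- p)) = 1" using assms by simp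
  qed
  have P: "(\<exists>x y. x < -j \<and> y > -p \<and> t (-x) (-y) = 1) \<longrightarrow>
     ((\<exists>x. x < -j \<and> t (-x) p = 1) \<noteq> (\<exists>y. y > -p \<and> t j (-y) = 1))"
    using T2.part1 by simp
  have e1: "(\<exists>x y. x < -j \<and> y > -p \<and> t (-x) (-y) = 1) = (\<exists>x y. x > j \<and> y < p \<and> t x y = 1)"
    by (metis minus_less_iff minus_minus)
  have e2: "(\<exists>x. x < -j \<and> t (-x) p = 1) = (\<exists>x. x > j \<and> t x p = 1)"
    by (metis minus_less_iff minus_minus)
  have e3: "(\<exists>y. y > -p \<and> t j (-y) = 1) = (\<exists>y. y < p \<and> t j y = 1)"
    by (metis minus_less_iff minus_minus)
  show "(\<exists>x y. x > j \<and> y < p \<and> t x y = 1) \<longrightarrow>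
           ((\<exists>x. x > j \<and> t x p = 1) \<noteq> (\<exists>y. y < p \<and> t j y = 1))"
    using P e1 e2 e3 by simp
qed

end
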